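(* There is a partition $\{B_\xi:\xi<\mathfrak c\}$ of $\mathbb R$ into Bernstein sets such that for every $\xi<\mathfrak c$ the set $B_\xi$ is a ${<}\operatorname{cf}(\mathfrak c)$-covering.
   Context: $\mathfrak c=|\mathbb R|$ and $\operatorname{cf}$ denotes cofinality. A set $B\subseteq\mathbb R$ is a Bernstein set if for every uncountable Borel set $Z\subseteq\mathbb R$ both $Z\cap B$ and $Z\setminus B$ are nonempty. A set $A\subseteq\mathbb R$ is a ${<}\kappa$-covering if for every $B\subseteq\mathbb R$ with $|B|<\kappa$ there is $x\in\mathbb R$ with $B+x\subseteq A$. *)

theory Defs
  imports "HOL-Analysis.Analysis"
begin

definition Bernstein :: "real set \<Rightarrow> bool" where
  "Bernstein B \<equiv> \<forall>Z. Z \<in> sets borel \<and> uncountable Z \<longrightarrow> Z \<inter> B \<noteq> {} \<and> Z - B \<noteq> {}"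

text \<open>The well-order card_of UNIV on the reals is a cardinal (initial) well-order of
  order type continuum; cf(continuum) is the least cardinality of a cofinal subset of it.
  A set X has cardinality less than cf(continuum) iff it is strictly smaller than
  every cofinal subset.\<close>
definition less_cf_continuum :: "real set \<Rightarrow> bool" where
  "less_cf_continuum X \<equiv>
     \<forall>A. cofinal A (card_of (UNIV :: real set)) \<longrightarrow> (card_of X, card_of A) \<in> ordLess"

definition lt_covering_cf_c :: "real set \<Rightarrow> bool" where
  "lt_covering_cf_c A \<equiv> \<forall>B. less_cf_continuum B \<longrightarrow> (\<exists>x. (\<lambda>b. b + x) ` B \<subseteq> A)"

end

theory Submission
  imports Defs
begin

unbundle cardinal_syntax

definition pre :: "(nat \<Rightarrow> bool) \<Rightarrow> nat \<Rightarrow> bool list" where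
  "pre \<alpha> n = rev (map \<alpha> [0..<n])"

definition Pc :: "(bool list \<Rightarrow> real) \<Rightarrow> real set" where
  "Pc c = {L. \<exists>\<alpha>. (\<lambda>n. c (pre \<alpha> n)) \<longlonglongrightarrow> L}"

lemma times_less_inf:
  assumes INF: "\<not>finite C" and LESS1: "|A| <o |C|" and LESS2: "|B| <o |C|"
  shows "|A \<times> B| <o |C|"
proof (cases "A = {} \<or> B = {}")
  case True
  then have "A \<times> B = {}" by blast
  moreover have "|{}::('a\<times>'b) set| =o |{}::'a set|" "|{}::('a\<times>'b) set| =o |{}::'b set|"
    using card_of_empty_ordIso by blast+
  ultimately show ?thesis
  proof (cases "A = {}")
    case True
    have "|A \<times> B| =o |A|" using True card_of_empty_ordIso by simp
    then show ?thesis using LESS1 ordIso_ordLess_trans by blast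
  next
    case False
    then have "B = {}" using \<open>A = {} \<or> B = {}\<close> by blast
    have "|A \<times> B| =o |B|" using \<open>B = {}\<close> card_of_empty_ordIso by simp
    then show ?thesis using LESS2 ordIso_ordLess_trans by blast
  qed
next
  case Case2: False
  {assume *: "|C| \<le>o |A \<times> B|"
    hence "\<not>finite (A \<times> B)" using INF card_of_ordLeq_finite by blast
    hence 1: "\<not>finite A \<or> \<not>finite B" using finite_cartesian_product by blast
    {assume Case21: "|A| \<le>o |B|"
      hence "\<not>finite B" using 1 card_of_ordLeq_finite by blast
      hence "|A \<times> B| =o |B|" using Case2 Case21 by (auto simp: card_of_Times_infinite)
      hence False using ordLeq_ordIso_trans[OF *] LESS2 not_ordLess_ordLeq by blast }
    moreover
    {assume Case22: "|B| \<le>o |A|"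
      hence "\<not>finite A" using 1 card_of_ordLeq_finite by blast
      hence "|A \<times> B| =o |A|" using Case2 Case22 by (auto simp: card_of_Times_infinite)
      hence False using ordLeq_ordIso_trans[OF *] LESS1 not_ordLess_ordLeq by blast }
    ultimately have False using ordLeq_total[OF card_of_Well_order[of A] card_of_Well_order[of B]] by blast }
  thus ?thesis using ordLess_or_ordLeq[OF card_of_Well_order[of "A \<times> B"] card_of_Well_order[of "C"]] by blast
qed



definition Nb :: "nat list \<Rightarrow> (nat \<Rightarrow> nat) set" where
  "Nb s = {x. \<forall>i<length s. x i = s ! i}"
definition bclosed :: "(nat \<Rightarrow> nat) set \<Rightarrow> bool" where
  "bclosed C \<longleftrightarrow> (\<forall>x. (\<forall>n. \<exists>y\<in>C. \<forall>i<n. y i = x i) \<longrightarrow> x \<in> C)"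
definition bcont :: "(nat \<Rightarrow> nat) set \<Rightarrow> ((nat \<Rightarrow> nat) \<Rightarrow> real) \<Rightarrow> bool" where
  "bcont C f \<longleftrightarrow> (\<forall>x\<in>C. \<forall>e>0. \<exists>n. \<forall>y\<in>C. (\<forall>i<n. y i = x i) \<longrightarrow> \<bar>f y - f x\<bar> < e)"
definition analytic :: "real set \<Rightarrow> bool" where
  "analytic A \<longleftrightarrow> (\<exists>C f. bclosed C \<and> bcont C f \<and> A = f ` C)"

definition ext :: "nat list \<Rightarrow> nat list \<Rightarrow> bool" where
  "ext s s' \<longleftrightarrow> length s < length s' \<and> take (length s) s' = s"

lemma length_pre[simp]: "length (pre \<alpha> n) = n" unfolding pre_def by simp
lemma pre_Suc[simp]: "pre \<alpha> (Suc n) = \<alpha> n # pre \<alpha> n" unfolding pre_def by simp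

locale perf =
  fixes C :: "(nat \<Rightarrow> nat) set" and f :: "(nat \<Rightarrow> nat) \<Rightarrow> real"
  assumes clo: "bclosed C" and con: "bcont C f" and unc: "uncountable (f ` C)"
begin

definition bad where "bad s \<longleftrightarrow> countable (f ` (C \<inter> Nb s))"
definition D where "D = (\<Union>s\<in>{s. bad s}. Nb s)"
definition F where "F = C - D"
definition good where "good s \<longleftrightarrow> F \<inter> Nb s \<noteq> {}"

lemma countD: "countable (f ` (C \<inter> D))"
proof -
  have "f ` (C \<inter> D) = (\<Union>s\<in>{s. bad s}. f ` (C \<inter> Nb s))" unfolding D_def by auto
  moreover have "countable (\<Union>s\<in>{s. bad s}. f ` (C \<inter> Nb s))"
  proof (rule countable_UN)
    have "countable (UNIV :: nat list set)" by simp
    then show "countable {s. bad s}" by (rule countable_subset[OF subset_UNIV])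
  qed (simp add: bad_def)
  ultimately show ?thesis by simp
qed

lemma good_unc: assumes "good s" shows "uncountable (f ` (F \<inter> Nb s))"
proof
  assume cF: "countable (f ` (F \<inter> Nb s))"
  obtain x where x: "x \<in> F" "x \<in> Nb s" using assms unfolding good_def by blast
  then have "\<not> bad s" unfolding F_def D_def by blast
  moreover have "f ` (C \<inter> Nb s) \<subseteq> f ` (F \<inter> Nb s) \<union> f ` (C \<inter> D)" unfolding F_def by blast
  then have "countable (f ` (C \<inter> Nb s))" by (rule countable_subset[OF _ countable_Un[OF cF countD]])
  ultimately show False unfolding bad_def by simp
qed

lemma good_Nil: "good []"
proof -
  have "f ` C \<subseteq> f ` F \<union> f ` (C \<inter> D)" unfolding F_def by blast
  have "F \<noteq> {}"
  proof
    assume "F = {}"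
    then have "f ` C \<subseteq> f ` (C \<inter> D)" using \<open>f ` C \<subseteq> _\<close> by simp
    then have "countable (f ` C)" by (rule countable_subset[OF _ countD])
    then show False using unc by simp
  qed
  then show ?thesis unfolding good_def Nb_def by simp
qed

definition Q where
  "Q n s s0 s1 \<longleftrightarrow> good s0 \<and> good s1 \<and> ext s s0 \<and> ext s s1 \<and>
     f ` (C \<inter> Nb s0) \<inter> f ` (C \<inter> Nb s1) = {} \<and>
     (\<forall>y\<in>C \<inter> Nb s0. \<forall>y'\<in>C \<inter> Nb s0. \<bar>f y - f y'\<bar> < (1/2)^n) \<and>
     (\<forall>y\<in>C \<inter> Nb s1. \<forall>y'\<in>C \<inter> Nb s1. \<bar>f y - f y'\<bar> < (1/2)^n)"

lemma Nb_map: "x \<in> Nb (map x [0..<m])" unfolding Nb_def by simp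

lemma ext_map: assumes "x \<in> Nb s" "length s < m" shows "ext s (map x [0..<m])"
  unfolding ext_def
proof
  show "length s < length (map x [0..<m])" using assms by simp
  show "take (length s) (map x [0..<m]) = s"
    using assms unfolding Nb_def by (auto simp: list_eq_iff_nth_eq min_def)
qed

lemma split_ex: assumes "good s" shows "\<exists>s0 s1. Q n s s0 s1"
proof -
  have "uncountable (f ` (F \<inter> Nb s))" by (rule good_unc[OF assms])
  then have ne: "f ` (F \<inter> Nb s) \<noteq> {}" by auto
  then obtain y0 where y0: "y0 \<in> f ` (F \<inter> Nb s)" by blast
  have "\<not> f ` (F \<inter> Nb s) \<subseteq> {y0}"
  proof
    assume "f ` (F \<inter> Nb s) \<subseteq> {y0}"
    then have "countable (f ` (F \<inter> Nb s))" by (rule countable_subset) simp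
    then show False using \<open>uncountable (f ` (F \<inter> Nb s))\<close> by simp
  qed
  then obtain y1 where y1: "y1 \<in> f ` (F \<inter> Nb s)" "y1 \<noteq> y0" by blast
  obtain x0 where x0: "x0 \<in> F \<inter> Nb s" "f x0 = y0" using y0 by blast
  obtain x1 where x1: "x1 \<in> F \<inter> Nb s" "f x1 = y1" using y1 by blast
  have x: "x0 \<in> F \<inter> Nb s" "x1 \<in> F \<inter> Nb s" "f x0 \<noteq> f x1" using x0 x1 y1 by auto
  define d where "d = \<bar>f x0 - f x1\<bar>"
  have d: "d > 0" using x(3) unfolding d_def by simp
  define \<epsilon> where "\<epsilon> = min ((1/2)^n / 2) (d/3)"
  have eps: "\<epsilon> > 0" unfolding \<epsilon>_def using d by simp
  have eps1: "\<epsilon> \<le> d/3" "\<epsilon> \<le> (1/2)^n / 2" unfolding \<epsilon>_def by auto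
  have xC: "x0 \<in> C" "x1 \<in> C" using x unfolding F_def by auto
  obtain n0 where n0: "\<forall>y\<in>C. (\<forall>i<n0. y i = x0 i) \<longrightarrow> \<bar>f y - f x0\<bar> < \<epsilon>"
    using con xC(1) eps unfolding bcont_def by blast
  obtain n1 where n1: "\<forall>y\<in>C. (\<forall>i<n1. y i = x1 i) \<longrightarrow> \<bar>f y - f x1\<bar> < \<epsilon>"
    using con xC(2) eps unfolding bcont_def by blast
  define s0 where "s0 = map x0 [0..<max n0 (Suc (length s))]"
  define s1 where "s1 = map x1 [0..<max n1 (Suc (length s))]"
  have b0: "\<bar>f y - f x0\<bar> < \<epsilon>" if "y \<in> C \<inter> Nb s0" for y
    using n0 that unfolding s0_def Nb_def by auto
  have b1: "\<bar>f y - f x1\<bar> < \<epsilon>" if "y \<in> C \<inter> Nb s1" for y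
    using n1 that unfolding s1_def Nb_def by auto
  have "Q n s s0 s1" unfolding Q_def
  proof (intro conjI)
    show "good s0" unfolding good_def s0_def using x(1) Nb_map by blast
    show "good s1" unfolding good_def s1_def using x(2) Nb_map by blast
    show "ext s s0" unfolding s0_def using x(1) by (intro ext_map) auto
    show "ext s s1" unfolding s1_def using x(2) by (intro ext_map) auto
    show "f ` (C \<inter> Nb s0) \<inter> f ` (C \<inter> Nb s1) = {}"
    proof (rule ccontr)
      assume "f ` (C \<inter> Nb s0) \<inter> f ` (C \<inter> Nb s1) \<noteq> {}"
      then obtain y y' where yy: "y \<in> C \<inter> Nb s0" "y' \<in> C \<inter> Nb s1" "f y = f y'" by blast
      have "\<bar>f y - f x0\<bar> < \<epsilon>" using b0 yy(1) by blast
      moreover have "\<bar>f y' - f x1\<bar> < \<epsilon>" using b1 yy(2) by blast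
      ultimately have "\<bar>f y - f x0\<bar> < \<epsilon>" "\<bar>f y - f x1\<bar> < \<epsilon>" using yy(3) by auto
      then have "d < 2 * \<epsilon>" unfolding d_def by linarith
      then show False using eps1 d by linarith
    qed
    show "\<forall>y\<in>C \<inter> Nb s0. \<forall>y'\<in>C \<inter> Nb s0. \<bar>f y - f y'\<bar> < (1/2)^n"
    proof (intro ballI)
      fix y y' assume "y \<in> C \<inter> Nb s0" "y' \<in> C \<inter> Nb s0"
      then have "\<bar>f y - f x0\<bar> < \<epsilon>" "\<bar>f y' - f x0\<bar> < \<epsilon>" using b0 by auto
      then show "\<bar>f y - f y'\<bar> < (1/2)^n" using eps1 by linarith
    qed
    show "\<forall>y\<in>C \<inter> Nb s1. \<forall>y'\<in>C \<inter> Nb s1. \<bar>f y - f y'\<bar> < (1/2)^n"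
    proof (intro ballI)
      fix y y' assume "y \<in> C \<inter> Nb s1" "y' \<in> C \<inter> Nb s1"
      then have "\<bar>f y - f x1\<bar> < \<epsilon>" "\<bar>f y' - f x1\<bar> < \<epsilon>" using b1 by auto
      then show "\<bar>f y - f y'\<bar> < (1/2)^n" using eps1 by linarith
    qed
  qed
  then show ?thesis by blast
qed


definition spl :: "nat \<Rightarrow> nat list \<Rightarrow> bool \<Rightarrow> nat list" where
  "spl n s b = (let p = (SOME p. Q n s (fst p) (snd p)) in if b then fst p else snd p)"

lemma spl_Q: assumes "good s" shows "Q n s (spl n s True) (spl n s False)"
proof -
  obtain s0 s1 where "Q n s s0 s1" using split_ex[OF assms] by blast
  then have "\<exists>p. Q n s (fst p) (snd p)" by (intro exI[of _ "(s0,s1)"]) simp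
  from someI_ex[OF this] show ?thesis unfolding spl_def Let_def by simp
qed

fun seqR :: "bool list \<Rightarrow> nat list" where
  "seqR [] = []"
| "seqR (b # t) = spl (length t) (seqR t) b"

lemma seqR_good: "good (seqR t)"
proof (induction t)
  case Nil then show ?case using good_Nil by simp
next
  case (Cons b t)
  then show ?case using spl_Q[OF Cons.IH, of "length t"] unfolding Q_def by (cases b) auto
qed

lemma seqR_Q: "Q (length t) (seqR t) (seqR (True#t)) (seqR (False#t))"
  using spl_Q[OF seqR_good[of t]] by simp

lemma seqR_ext: "ext (seqR t) (seqR (b#t))"
  using seqR_Q[of t] unfolding Q_def by (cases b) auto

lemma seqR_diam: "y \<in> C \<inter> Nb (seqR (b#t)) \<Longrightarrow> y' \<in> C \<inter> Nb (seqR (b#t)) \<Longrightarrow>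
   \<bar>f y - f y'\<bar> < (1/2)^(length t)"
  using seqR_Q[of t] unfolding Q_def by (cases b) auto

definition node where "node \<alpha> n = seqR (pre \<alpha> n)"

lemma node_ext: "ext (node \<alpha> n) (node \<alpha> (Suc n))"
  unfolding node_def pre_Suc by (rule seqR_ext)

lemma node_len: "n \<le> length (node \<alpha> n)"
proof (induction n)
  case 0 then show ?case by simp
next
  case (Suc n) then show ?case using node_ext[of \<alpha> n] unfolding ext_def by simp
qed

lemma node_prefix: "n \<le> m \<Longrightarrow> length (node \<alpha> n) \<le> length (node \<alpha> m) \<and>
    take (length (node \<alpha> n)) (node \<alpha> m) = node \<alpha> n"
proof (induction m rule: dec_induct)
  case base then show ?case by simp
next
  case (step m)
  have e: "length (node \<alpha> m) < length (node \<alpha> (Suc m))"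
     "take (length (node \<alpha> m)) (node \<alpha> (Suc m)) = node \<alpha> m"
    using node_ext[of \<alpha> m] unfolding ext_def by auto
  have "take (length (node \<alpha> n)) (node \<alpha> (Suc m)) =
        take (length (node \<alpha> n)) (take (length (node \<alpha> m)) (node \<alpha> (Suc m)))"
    using step.IH by (simp add: min_def)
  also have "\<dots> = node \<alpha> n" using e(2) step.IH by simp
  finally show ?case using e(1) step.IH by simp
qed

definition xa where "xa \<alpha> i = node \<alpha> (Suc i) ! i"

lemma xa_Nb: "xa \<alpha> \<in> Nb (node \<alpha> n)"
  unfolding Nb_def
proof (intro CollectI allI impI)
  fix i assume i: "i < length (node \<alpha> n)"
  define m where "m = max n (Suc i)"
  have p1: "take (length (node \<alpha> n)) (node \<alpha> m) = node \<alpha> n" "length (node \<alpha> n) \<le> length (node \<alpha> m)"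
    using node_prefix[of n m \<alpha>] unfolding m_def by auto
  have p2: "take (length (node \<alpha> (Suc i))) (node \<alpha> m) = node \<alpha> (Suc i)"
    using node_prefix[of "Suc i" m \<alpha>] unfolding m_def by auto
  have li: "i < length (node \<alpha> (Suc i))" using node_len[of "Suc i" \<alpha>] by simp
  have "node \<alpha> n ! i = node \<alpha> m ! i" using i p1 nth_take[of i "length (node \<alpha> n)" "node \<alpha> m"] by simp
  moreover have "node \<alpha> (Suc i) ! i = node \<alpha> m ! i"
    using li p2 nth_take[of i "length (node \<alpha> (Suc i))" "node \<alpha> m"] by simp
  ultimately show "xa \<alpha> i = node \<alpha> n ! i" unfolding xa_def by simp
qed

lemma FC: "F \<subseteq> C" unfolding F_def by blast

lemma xa_C: "xa \<alpha> \<in> C"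
proof -
  have "\<exists>y\<in>C. \<forall>i<n. y i = xa \<alpha> i" for n
  proof -
    have "good (node \<alpha> n)" unfolding node_def by (rule seqR_good)
    then obtain y where y: "y \<in> F" "y \<in> Nb (node \<alpha> n)" unfolding good_def by blast
    have "\<forall>i<n. y i = xa \<alpha> i"
    proof (intro allI impI)
      fix i assume "i < n"
      then have "i < length (node \<alpha> n)" using node_len[of n \<alpha>] by simp
      then show "y i = xa \<alpha> i" using y(2) xa_Nb[of \<alpha> n] unfolding Nb_def by simp
    qed
    then show ?thesis using y(1) FC by blast
  qed
  then show ?thesis using clo unfolding bclosed_def by blast
qed

definition cd :: "bool list \<Rightarrow> real" where
  "cd t = f (SOME y. y \<in> F \<inter> Nb (seqR t))"

lemma cd_pt: "(SOME y. y \<in> F \<inter> Nb (seqR t)) \<in> C \<inter> Nb (seqR t)"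
proof -
  have "\<exists>y. y \<in> F \<inter> Nb (seqR t)" using seqR_good[of t] unfolding good_def by blast
  from someI_ex[OF this] show ?thesis using FC by blast
qed

lemma cd_close: "\<bar>cd (pre \<alpha> (Suc n)) - f (xa \<alpha>)\<bar> < (1/2)^n"
proof -
  have "xa \<alpha> \<in> C \<inter> Nb (seqR (\<alpha> n # pre \<alpha> n))"
    using xa_C xa_Nb[of \<alpha> "Suc n"] unfolding node_def by simp
  moreover have "(SOME y. y \<in> F \<inter> Nb (seqR (\<alpha> n # pre \<alpha> n))) \<in> C \<inter> Nb (seqR (\<alpha> n # pre \<alpha> n))"
    by (rule cd_pt)
  ultimately show ?thesis unfolding cd_def using seqR_diam[of _ "\<alpha> n" "pre \<alpha> n"] by simp
qed

lemma cd_conv: "(\<lambda>n. cd (pre \<alpha> n)) \<longlonglongrightarrow> f (xa \<alpha>)"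
proof -
  have "(\<lambda>n. cd (pre \<alpha> (Suc n)) - f (xa \<alpha>)) \<longlonglongrightarrow> 0"
  proof (rule Lim_null_comparison)
    show "\<forall>\<^sub>F n in sequentially. norm (cd (pre \<alpha> (Suc n)) - f (xa \<alpha>)) \<le> (1/2)^n"
      using cd_close[of \<alpha>] by (intro always_eventually allI) (simp add: less_imp_le)
    show "(\<lambda>n. (1/2::real)^n) \<longlonglongrightarrow> 0" by (rule LIMSEQ_power_zero) simp
  qed
  then have "(\<lambda>n. cd (pre \<alpha> (Suc n))) \<longlonglongrightarrow> f (xa \<alpha>)" by (simp add: Lim_null[symmetric])
  then show ?thesis by (rule LIMSEQ_imp_Suc)
qed

lemma pre_eq: "\<forall>i<n. \<alpha> i = \<beta> i \<Longrightarrow> pre \<alpha> n = pre \<beta> n"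
  unfolding pre_def by simp

lemma inj_h: "inj (\<lambda>\<alpha>. f (xa \<alpha>))"
proof (rule injI)
  fix \<alpha> \<beta> assume eq: "f (xa \<alpha>) = f (xa \<beta>)"
  show "\<alpha> = \<beta>"
  proof (rule ccontr)
    assume "\<alpha> \<noteq> \<beta>"
    then have "\<exists>n. \<alpha> n \<noteq> \<beta> n" by auto
    then obtain n where n: "\<alpha> n \<noteq> \<beta> n" "\<forall>i<n. \<alpha> i = \<beta> i"
      using exists_least_iff[of "\<lambda>n. \<alpha> n \<noteq> \<beta> n"] by blast
    define t where "t = pre \<alpha> n"
    have tb: "pre \<beta> n = t" unfolding t_def using pre_eq[OF n(2)] by simp
    have a: "f (xa \<alpha>) \<in> f ` (C \<inter> Nb (seqR (\<alpha> n # t)))"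
      using xa_C xa_Nb[of \<alpha> "Suc n"] unfolding node_def t_def by simp
    have b: "f (xa \<beta>) \<in> f ` (C \<inter> Nb (seqR (\<beta> n # t)))"
      using xa_C xa_Nb[of \<beta> "Suc n"] tb unfolding node_def by simp
    have dj: "f ` (C \<inter> Nb (seqR (True # t))) \<inter> f ` (C \<inter> Nb (seqR (False # t))) = {}"
      using seqR_Q[of t] unfolding Q_def by blast
    show False
    proof (cases "\<alpha> n")
      case True
      then have "\<beta> n = False" using n(1) by simp
      then show False using a b dj eq True by auto
    next
      case False
      then have "\<beta> n = True" using n(1) by simp
      then show False using a b dj eq False by auto
    qed
  qed
qed

theorem perfect_analytic:
  "\<exists>c (h :: (nat\<Rightarrow>bool) \<Rightarrow> real). inj h \<and> range h \<subseteq> Pc c \<and> Pc c \<subseteq> f ` C"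
proof (intro exI conjI)
  show "inj (\<lambda>\<alpha>. f (xa \<alpha>))" by (rule inj_h)
  show "range (\<lambda>\<alpha>. f (xa \<alpha>)) \<subseteq> Pc cd" unfolding Pc_def using cd_conv by blast
  show "Pc cd \<subseteq> f ` C"
  proof
    fix L assume "L \<in> Pc cd"
    then obtain \<alpha> where "(\<lambda>n. cd (pre \<alpha> n)) \<longlonglongrightarrow> L" unfolding Pc_def by blast
    then have "L = f (xa \<alpha>)" using cd_conv LIMSEQ_unique by blast
    then show "L \<in> f ` C" using xa_C by blast
  qed
qed

end



lemma half_pow_small: "(e::real) > 0 \<Longrightarrow> \<exists>n. (1/2::real)^n < e"
proof -
  assume e: "e > 0"
  have "(\<lambda>n. (1/2::real)^n) \<longlonglongrightarrow> 0" by (rule LIMSEQ_power_zero) simp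
  from order_tendstoD(2)[OF this e] show ?thesis
    unfolding eventually_sequentially by blast
qed

lemma half_pow_mono: "n \<le> m \<Longrightarrow> (1/2::real)^m \<le> (1/2)^n"
  by (rule power_decreasing) auto

lemma analytic_empty: "analytic {}"
  unfolding analytic_def bclosed_def bcont_def
  by (rule exI[of _ "{}"]) auto

lemma analytic_transl: assumes "analytic A" shows "analytic ((\<lambda>x. x + d) ` A)"
proof -
  obtain C f where Cf: "bclosed C" "bcont C f" "A = f ` C" using assms unfolding analytic_def by blast
  have "bcont C (\<lambda>x. f x + d)" using Cf(2) unfolding bcont_def by simp
  moreover have "(\<lambda>x. x + d) ` A = (\<lambda>x. f x + d) ` C" using Cf(3) by auto
  ultimately show ?thesis using Cf(1) unfolding analytic_def by blast
qed

subsection \<open>Countable unions\<close>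

lemma choose_analytic:
  assumes "\<forall>n::nat. analytic (A n)"
  shows "\<exists>Cs fs. (\<forall>n. bclosed (Cs n)) \<and> (\<forall>n. bcont (Cs n) (fs n)) \<and> (\<forall>n. A n = fs n ` Cs n)"
proof -
  have "\<forall>n. \<exists>p. bclosed (fst p) \<and> bcont (fst p) (snd p) \<and> A n = snd p ` fst p"
  proof
    fix n
    obtain C f where "bclosed C" "bcont C f" "A n = f ` C" using assms unfolding analytic_def by blast
    then show "\<exists>p. bclosed (fst p) \<and> bcont (fst p) (snd p) \<and> A n = snd p ` fst p"
      by (intro exI[of _ "(C,f)"]) simp
  qed
  from choice[OF this] obtain P where "\<forall>n. bclosed (fst (P n)) \<and> bcont (fst (P n)) (snd (P n)) \<and> A n = snd (P n) ` fst (P n)"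
    by blast
  then show ?thesis by (intro exI[of _ "\<lambda>n. fst (P n)"] exI[of _ "\<lambda>n. snd (P n)"]) simp
qed

definition shft :: "(nat \<Rightarrow> nat) \<Rightarrow> nat \<Rightarrow> nat" where "shft x = (\<lambda>i. x (Suc i))"

lemma analytic_UN:
  assumes "\<And>n::nat. analytic (A n)" shows "analytic (\<Union>n. A n)"
proof -
  obtain Cs fs where H0: "\<forall>n. bclosed (Cs n)" "\<forall>n. bcont (Cs n) (fs n)" "\<forall>n. A n = fs n ` Cs n"
    using choose_analytic[of A, OF allI[OF assms]] by blast
  have H: "\<And>n. bclosed (Cs n)" "\<And>n. bcont (Cs n) (fs n)" "\<And>n. A n = fs n ` Cs n"
    using H0 by auto
  define C where "C = {x. shft x \<in> Cs (x 0)}"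
  define f where "f x = fs (x 0) (shft x)" for x
  have "bclosed C" unfolding bclosed_def
  proof (intro allI impI)
    fix x assume A: "\<forall>n. \<exists>y\<in>C. \<forall>i<n. y i = x i"
    have "\<exists>y\<in>Cs (x 0). \<forall>i<m. y i = shft x i" for m
    proof -
      obtain y where y: "y \<in> C" "\<forall>i<Suc m. y i = x i" using A by blast
      then have "y 0 = x 0" by simp
      then have "shft y \<in> Cs (x 0)" using y(1) unfolding C_def by simp
      moreover have "\<forall>i<m. shft y i = shft x i" using y(2) unfolding shft_def by simp
      ultimately show ?thesis by blast
    qed
    then have "shft x \<in> Cs (x 0)" using H(1)[of "x 0"] unfolding bclosed_def by blast
    then show "x \<in> C" unfolding C_def by simp
  qed
  moreover have "bcont C f" unfolding bcont_def
  proof (intro ballI allI impI)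
    fix x :: "nat \<Rightarrow> nat" and e :: real assume x: "x \<in> C" and e: "e > 0"
    then have "shft x \<in> Cs (x 0)" unfolding C_def by simp
    then obtain m where m: "\<forall>y\<in>Cs (x 0). (\<forall>i<m. y i = shft x i) \<longrightarrow> \<bar>fs (x 0) y - fs (x 0) (shft x)\<bar> < e"
      using H(2)[of "x 0"] e unfolding bcont_def by blast
    show "\<exists>n. \<forall>y\<in>C. (\<forall>i<n. y i = x i) \<longrightarrow> \<bar>f y - f x\<bar> < e"
    proof (intro exI[of _ "Suc m"] ballI impI)
      fix y assume y: "y \<in> C" "\<forall>i<Suc m. y i = x i"
      then have y0: "y 0 = x 0" by simp
      then have "shft y \<in> Cs (x 0)" using y(1) unfolding C_def by simp
      moreover have "\<forall>i<m. shft y i = shft x i" using y(2) unfolding shft_def by simp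
      ultimately show "\<bar>f y - f x\<bar> < e" using m y0 unfolding f_def by simp
    qed
  qed
  moreover have "(\<Union>n. A n) = f ` C"
  proof
    show "f ` C \<subseteq> (\<Union>n. A n)" unfolding f_def C_def H(3) by auto
    show "(\<Union>n. A n) \<subseteq> f ` C"
    proof
      fix z assume "z \<in> (\<Union>n. A n)"
      then obtain n w where w: "w \<in> Cs n" "z = fs n w" using H(3) by blast
      define x where "x = case_nat n w"
      have "shft x = w" "x 0 = n" unfolding x_def shft_def by auto
      then show "z \<in> f ` C" using w unfolding C_def f_def by (auto intro!: image_eqI[of _ _ x])
    qed
  qed
  ultimately show ?thesis unfolding analytic_def by blast
qed

subsection \<open>Countable intersections\<close>

lemma abs_help: "\<bar>a - b\<bar> < \<bar>b - e\<bar> / 2 \<Longrightarrow> \<bar>c - e\<bar> < \<bar>b - e\<bar> / 2 \<Longrightarrow> a = (c::real) \<Longrightarrow> False"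
  by (simp add: abs_if split: if_splits)

definition pcomp :: "(nat \<Rightarrow> nat) \<Rightarrow> nat \<Rightarrow> nat \<Rightarrow> nat" where
  "pcomp x k = (\<lambda>i. x (prod_encode (k,i)))"

lemma bound_enc: "\<exists>N. \<forall>i<m. prod_encode (k,i) < N"
proof -
  have "\<forall>i<m. prod_encode (k,i) < Suc (Max ((\<lambda>i. prod_encode (k,i)) ` {..<m}))"
    by (auto intro: le_imp_less_Suc Max_ge)
  then show ?thesis by blast
qed

lemma agree_comp: "\<forall>j<N. y j = x j \<Longrightarrow> \<forall>i<m. prod_encode (k,i) < N \<Longrightarrow> \<forall>i<m. pcomp y k i = pcomp x k i"
  unfolding pcomp_def by simp

lemma analytic_INT:
  assumes "\<And>n::nat. analytic (A n)" shows "analytic (\<Inter>n. A n)"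
proof -
  obtain Cs fs where H0: "\<forall>n. bclosed (Cs n)" "\<forall>n. bcont (Cs n) (fs n)" "\<forall>n. A n = fs n ` Cs n"
    using choose_analytic[of A, OF allI[OF assms]] by blast
  have H: "\<And>n. bclosed (Cs n)" "\<And>n. bcont (Cs n) (fs n)" "\<And>n. A n = fs n ` Cs n"
    using H0 by auto
  define C where "C = {x. \<forall>k. pcomp x k \<in> Cs k \<and> fs k (pcomp x k) = fs 0 (pcomp x 0)}"
  define f where "f x = fs 0 (pcomp x 0)" for x
  have "bclosed C" unfolding bclosed_def
  proof (intro allI impI)
    fix x assume A: "\<forall>n. \<exists>y\<in>C. \<forall>i<n. y i = x i"
    have inC: "pcomp x k \<in> Cs k" for k
    proof -
      have "\<exists>y\<in>Cs k. \<forall>i<m. y i = pcomp x k i" for m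
      proof -
        obtain N where N: "\<forall>i<m. prod_encode (k,i) < N" using bound_enc by blast
        obtain y where y: "y \<in> C" "\<forall>i<N. y i = x i" using A by blast
        have "pcomp y k \<in> Cs k" using y(1) unfolding C_def by simp
        moreover have "\<forall>i<m. pcomp y k i = pcomp x k i" using agree_comp[OF y(2) N] .
        ultimately show ?thesis by blast
      qed
      then show ?thesis using H(1)[of k] unfolding bclosed_def by blast
    qed
    have eqk: "fs k (pcomp x k) = fs 0 (pcomp x 0)" for k
    proof (rule ccontr)
      assume ne: "fs k (pcomp x k) \<noteq> fs 0 (pcomp x 0)"
      define e where "e = \<bar>fs k (pcomp x k) - fs 0 (pcomp x 0)\<bar> / 2"
      have e: "e > 0" using ne unfolding e_def by simp
      obtain m1 where m1: "\<forall>y\<in>Cs k. (\<forall>i<m1. y i = pcomp x k i) \<longrightarrow> \<bar>fs k y - fs k (pcomp x k)\<bar> < e"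
        using H(2)[of k] inC[of k] e unfolding bcont_def by blast
      obtain m2 where m2: "\<forall>y\<in>Cs 0. (\<forall>i<m2. y i = pcomp x 0 i) \<longrightarrow> \<bar>fs 0 y - fs 0 (pcomp x 0)\<bar> < e"
        using H(2)[of 0] inC[of 0] e unfolding bcont_def by blast
      obtain N1 where N1: "\<forall>i<m1. prod_encode (k,i) < N1" using bound_enc by blast
      obtain N2 where N2: "\<forall>i<m2. prod_encode (0,i) < N2" using bound_enc by blast
      obtain y where y: "y \<in> C" "\<forall>i<max N1 N2. y i = x i" using A by blast
      have y1: "\<forall>i<N1. y i = x i" "\<forall>i<N2. y i = x i" using y(2) by auto
      have c: "pcomp y k \<in> Cs k" "pcomp y 0 \<in> Cs 0" "fs k (pcomp y k) = fs 0 (pcomp y 0)"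
        using y(1) unfolding C_def by auto
      have "\<bar>fs k (pcomp y k) - fs k (pcomp x k)\<bar> < e" using m1 c(1) agree_comp[OF y1(1) N1] by blast
      moreover have "\<bar>fs 0 (pcomp y 0) - fs 0 (pcomp x 0)\<bar> < e" using m2 c(2) agree_comp[OF y1(2) N2] by blast
      ultimately show False using c(3) abs_help unfolding e_def by blast
    qed
    show "x \<in> C" unfolding C_def using inC eqk by blast
  qed
  moreover have "bcont C f" unfolding bcont_def
  proof (intro ballI allI impI)
    fix x :: "nat \<Rightarrow> nat" and e :: real assume x: "x \<in> C" and e: "e > 0"
    then have "pcomp x 0 \<in> Cs 0" unfolding C_def by simp
    then obtain m where m: "\<forall>y\<in>Cs 0. (\<forall>i<m. y i = pcomp x 0 i) \<longrightarrow> \<bar>fs 0 y - fs 0 (pcomp x 0)\<bar> < e"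
      using H(2)[of 0] e unfolding bcont_def by blast
    obtain N where N: "\<forall>i<m. prod_encode (0,i) < N" using bound_enc by blast
    show "\<exists>n. \<forall>y\<in>C. (\<forall>i<n. y i = x i) \<longrightarrow> \<bar>f y - f x\<bar> < e"
    proof (intro exI[of _ N] ballI impI)
      fix y assume y: "y \<in> C" "\<forall>i<N. y i = x i"
      have "pcomp y 0 \<in> Cs 0" using y(1) unfolding C_def by simp
      then show "\<bar>f y - f x\<bar> < e" using m agree_comp[OF y(2) N] unfolding f_def by blast
    qed
  qed
  moreover have "(\<Inter>n. A n) = f ` C"
  proof
    show "f ` C \<subseteq> (\<Inter>n. A n)"
    proof
      fix z assume "z \<in> f ` C"
      then obtain x where x: "x \<in> C" "z = f x" by blast
      have "z \<in> A k" for k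
      proof -
        have "pcomp x k \<in> Cs k" "fs k (pcomp x k) = fs 0 (pcomp x 0)" using x(1) unfolding C_def by auto
        then have "z = fs k (pcomp x k)" "pcomp x k \<in> Cs k" using x(2) unfolding f_def by auto
        then show ?thesis using H(3)[of k] by blast
      qed
      then show "z \<in> (\<Inter>n. A n)" by blast
    qed
    show "(\<Inter>n. A n) \<subseteq> f ` C"
    proof
      fix z assume z: "z \<in> (\<Inter>n. A n)"
      have "\<forall>k. \<exists>w. w \<in> Cs k \<and> fs k w = z"
      proof
        fix k
        have "z \<in> A k" using z by blast
        then have "z \<in> fs k ` Cs k" using H(3)[of k] by simp
        then show "\<exists>w. w \<in> Cs k \<and> fs k w = z" by auto
      qed
      from choice[OF this] obtain w where w0: "\<forall>k. w k \<in> Cs k \<and> fs k (w k) = z" by blast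
      have w: "\<And>k. w k \<in> Cs k" "\<And>k. fs k (w k) = z" using w0 by auto
      define x where "x j = w (fst (prod_decode j)) (snd (prod_decode j))" for j
      have cx: "pcomp x k = w k" for k unfolding pcomp_def x_def by simp
      have "x \<in> C" unfolding C_def by (simp add: cx w)
      moreover have "z = f x" unfolding f_def by (simp add: cx w)
      ultimately show "z \<in> f ` C" by blast
    qed
  qed
  ultimately show ?thesis unfolding analytic_def by blast
qed


subsection \<open>The unit interval\<close>

definition tm :: "(nat \<Rightarrow> nat) \<Rightarrow> nat \<Rightarrow> real" where
  "tm x i = real (min (x i) 1) * (1/2)^(Suc i)"
definition gb :: "(nat \<Rightarrow> nat) \<Rightarrow> real" where "gb x = suminf (tm x)"

lemma tm_nonneg: "0 \<le> tm x i" unfolding tm_def by simp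
lemma tm_le: "tm x i \<le> (1/2)^(Suc i)"
  unfolding tm_def by (cases "x i") auto

lemma geo: "(\<lambda>i. (1/2::real)^(Suc (i+n))) sums ((1/2)^n)"
proof -
  have "(\<lambda>i. (1/2::real)^i) sums (1 / (1 - 1/2))" by (rule geometric_sums) simp
  then have "(\<lambda>i. (1/2::real)^(Suc n) * (1/2)^i) sums ((1/2)^(Suc n) * (1 / (1 - 1/2)))"
    by (rule sums_mult)
  moreover have "(\<lambda>i. (1/2::real)^(Suc n) * (1/2)^i) = (\<lambda>i. (1/2::real)^(Suc (i+n)))"
    by (simp add: power_add mult.commute)
  moreover have "(1/2::real)^(Suc n) * (1 / (1 - 1/2)) = (1/2)^n" by simp
  ultimately show ?thesis by simp
qed

lemma summ_tail: "summable (\<lambda>i. tm x (i+n))"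
  by (rule summable_comparison_test'[OF sums_summable[OF geo[of n]]]) (simp only: real_norm_def abs_of_nonneg[OF tm_nonneg] tm_le)

lemma summ: "summable (tm x)" using summ_tail[of x 0] by simp

lemma gb_bounds: "(\<Sum>i<n. tm x i) \<le> gb x \<and> gb x \<le> (\<Sum>i<n. tm x i) + (1/2)^n"
proof -
  have split: "gb x = (\<Sum>i. tm x (i+n)) + (\<Sum>i<n. tm x i)"
    unfolding gb_def by (rule suminf_split_initial_segment[OF summ])
  have "0 \<le> (\<Sum>i. tm x (i+n))" by (rule suminf_nonneg[OF summ_tail]) (simp add: tm_nonneg)
  moreover have "(\<Sum>i. tm x (i+n)) \<le> (\<Sum>i. (1/2::real)^(Suc (i+n)))"
    by (rule suminf_le[OF _ summ_tail sums_summable[OF geo[of n]]]) (rule tm_le)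
  moreover have "(\<Sum>i. (1/2::real)^(Suc (i+n))) = (1/2)^n" using geo[of n] by (simp add: sums_iff)
  ultimately show ?thesis using split by linarith
qed

lemma gb_cont: "bcont UNIV gb"
  unfolding bcont_def
proof (intro ballI allI impI)
  fix x :: "nat \<Rightarrow> nat" and e :: real assume "e > 0"
  then obtain n where n: "(1/2::real)^n < e" using half_pow_small by blast
  show "\<exists>n. \<forall>y\<in>UNIV. (\<forall>i<n. y i = x i) \<longrightarrow> \<bar>gb y - gb x\<bar> < e"
  proof (intro exI[of _ n] ballI impI)
    fix y assume "\<forall>i<n. y i = x i"
    then have "(\<Sum>i<n. tm y i) = (\<Sum>i<n. tm x i)" unfolding tm_def by (intro sum.cong) auto
    then show "\<bar>gb y - gb x\<bar> < e" using gb_bounds[where n=n and x=x] gb_bounds[where n=n and x=y] n by (simp add: abs_if)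
  qed
qed

lemma gb_range: "gb x \<in> {0..1}" using gb_bounds[where n=0 and x=x] by simp

primrec sq :: "real \<Rightarrow> nat \<Rightarrow> real" where
  "sq t 0 = 0"
| "sq t (Suc n) = (if sq t n + (1/2)^(Suc n) \<le> t then sq t n + (1/2)^(Suc n) else sq t n)"

definition dig :: "real \<Rightarrow> nat \<Rightarrow> nat" where
  "dig t n = (if sq t n + (1/2)^(Suc n) \<le> t then 1 else 0)"

lemma sum_dig: "(\<Sum>i<n. tm (dig t) i) = sq t n"
  by (induction n) (simp_all add: tm_def dig_def)

lemma sq_inv: "0 \<le> t \<Longrightarrow> t \<le> 1 \<Longrightarrow> sq t n \<le> t \<and> t \<le> sq t n + (1/2)^n"
proof (induction n)
  case 0 then show ?case by simp
next
  case (Suc n)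
  define h where "h = (1/2::real)^(Suc n)"
  have h: "(1/2::real)^n = 2 * h" unfolding h_def by simp
  have IH: "sq t n \<le> t" "t \<le> sq t n + 2 * h" using Suc h by auto
  show ?case
  proof (cases "sq t n + h \<le> t")
    case True
    then have "sq t (Suc n) = sq t n + h" unfolding h_def by simp
    then show ?thesis using True IH unfolding h_def[symmetric] by simp
  next
    case False
    then have "sq t (Suc n) = sq t n" unfolding h_def by simp
    then show ?thesis using False IH unfolding h_def[symmetric] by simp
  qed
qed

lemma gb_surj: assumes "t \<in> {0..1}" shows "\<exists>x. gb x = t"
proof
  show "gb (dig t) = t"
  proof (rule ccontr)
    assume ne: "gb (dig t) \<noteq> t"
    then obtain n where n: "(1/2::real)^n < \<bar>gb (dig t) - t\<bar>" using half_pow_small[of "\<bar>gb (dig t) - t\<bar>"] by auto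
    have "sq t n \<le> gb (dig t)" "gb (dig t) \<le> sq t n + (1/2)^n"
      using gb_bounds[where n=n and x="dig t"] sum_dig[where n=n and t=t] by auto
    moreover have "sq t n \<le> t" "t \<le> sq t n + (1/2)^n" using sq_inv[where t=t and n=n] assms by auto
    ultimately have "gb (dig t) - t \<le> (1/2)^n" "t - gb (dig t) \<le> (1/2)^n" by linarith+
    then have "\<bar>gb (dig t) - t\<bar> \<le> (1/2)^n" by (simp add: abs_le_iff)
    then show False using n by linarith
  qed
qed

lemma analytic01: "analytic {0..1}"
proof -
  have "bclosed UNIV" unfolding bclosed_def by simp
  moreover have "gb ` UNIV = {0..1}" using gb_range gb_surj by blast
  ultimately show ?thesis unfolding analytic_def using gb_cont by blast
qed

lemma analytic_Ici: "analytic {a..}"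
proof -
  have eq: "{a..} = (\<Union>k::nat. (\<lambda>x. x + (a + real k)) ` {0..1})"
  proof
    show "{a..} \<subseteq> (\<Union>k::nat. (\<lambda>x. x + (a + real k)) ` {0..1})"
    proof
      fix y assume y: "y \<in> {a..}"
      define k where "k = nat \<lfloor>y - a\<rfloor>"
      have k: "real k = \<lfloor>y - a\<rfloor>" using y unfolding k_def by simp
      have "y - (a + real k) \<in> {0..1}" using k floor_le_iff[of "y-a"] by (simp, linarith)
      then show "y \<in> (\<Union>k::nat. (\<lambda>x. x + (a + real k)) ` {0..1})"
        by (intro UN_I[of k]) (auto intro!: image_eqI[of _ _ "y - (a + real k)"])
    qed
    show "(\<Union>k::nat. (\<lambda>x. x + (a + real k)) ` {0..1}) \<subseteq> {a..}" by auto
  qed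
  show ?thesis unfolding eq by (rule analytic_UN[OF analytic_transl[OF analytic01]])
qed

lemma analytic_Iic: "analytic {..a}"
proof -
  have eq: "{..a} = (\<Union>k::nat. (\<lambda>x. x + (a - real k - 1)) ` {0..1})"
  proof
    show "{..a} \<subseteq> (\<Union>k::nat. (\<lambda>x. x + (a - real k - 1)) ` {0..1})"
    proof
      fix y assume y: "y \<in> {..a}"
      define k where "k = nat \<lfloor>a - y\<rfloor>"
      have k: "real k = \<lfloor>a - y\<rfloor>" using y unfolding k_def by simp
      have "y - (a - real k - 1) \<in> {0..1}" using k floor_le_iff[of "a-y"] by (simp, linarith)
      then show "y \<in> (\<Union>k::nat. (\<lambda>x. x + (a - real k - 1)) ` {0..1})"
        by (intro UN_I[of k]) (auto intro!: image_eqI[of _ _ "y - (a - real k - 1)"])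
    qed
    show "(\<Union>k::nat. (\<lambda>x. x + (a - real k - 1)) ` {0..1}) \<subseteq> {..a}" by auto
  qed
  show ?thesis unfolding eq by (rule analytic_UN[OF analytic_transl[OF analytic01]])
qed

lemma analytic_Ioi: "analytic {a<..}"
proof -
  have eq: "{a<..} = (\<Union>n::nat. {a + inverse (real (Suc n))..})"
  proof
    show "{a<..} \<subseteq> (\<Union>n::nat. {a + inverse (real (Suc n))..})"
    proof
      fix y assume "y \<in> {a<..}"
      then obtain n where "inverse (real (Suc n)) < y - a" using reals_Archimedean[of "y - a"] by auto
      then show "y \<in> (\<Union>n::nat. {a + inverse (real (Suc n))..})" by (intro UN_I[of n]) auto
    qed
    show "(\<Union>n::nat. {a + inverse (real (Suc n))..}) \<subseteq> {a<..}"
    proof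
      fix y assume "y \<in> (\<Union>n::nat. {a + inverse (real (Suc n))..})"
      then obtain n where "a + inverse (real (Suc n)) \<le> y" by auto
      moreover have "0 < inverse (real (Suc n))" by simp
      ultimately have "a < y" by linarith
      then show "y \<in> {a<..}" by simp
    qed
  qed
  show ?thesis unfolding eq by (rule analytic_UN[OF analytic_Ici])
qed

lemma analytic_UNIV: "analytic (UNIV :: real set)"
proof -
  have eq: "(UNIV::real set) = (\<Union>n::nat. {- real n..})"
  proof (intro equalityI subsetI)
    fix y :: real
    obtain n :: nat where "- y \<le> real n" using real_arch_simple by blast
    then show "y \<in> (\<Union>n::nat. {- real n..})" by (intro UN_I[of n]) auto
  qed auto
  show ?thesis unfolding eq by (rule analytic_UN[OF analytic_Ici])
qed

lemma sets_borel_eq: "sets (borel :: real measure) = sigma_sets UNIV (range (\<lambda>a::real. {..a}))"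
  unfolding borel_eq_atMost by (rule sets_measure_of) blast

lemma sigma_analytic:
  "A \<in> sigma_sets UNIV (range (\<lambda>a::real. {..a})) \<Longrightarrow> analytic A \<and> analytic (- A)"
proof (induction rule: sigma_sets.induct)
  case (Basic a)
  then obtain b where "a = {..b}" by blast
  moreover have "- {..b} = {b<..}" by auto
  ultimately show ?case using analytic_Iic analytic_Ioi by simp
next
  case Empty
  then show ?case using analytic_empty analytic_UNIV by simp
next
  case (Compl a)
  then show ?case by (simp add: Compl_eq_Diff_UNIV[symmetric])
next
  case (Union a)
  have eq: "- (\<Union>i. a i) = (\<Inter>i. - a i)" by auto
  have 1: "\<And>i. analytic (a i)" "\<And>i. analytic (- a i)" using Union.IH by auto
  show ?case unfolding eq using analytic_UN[OF 1(1)] analytic_INT[OF 1(2)] by (rule conjI)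
qed

lemma borel_analytic: assumes "(Z::real set) \<in> sets borel" shows "analytic Z"
proof -
  have "Z \<in> sigma_sets UNIV (range (\<lambda>a::real. {..a}))" using assms unfolding sets_borel_eq .
  then show ?thesis by (rule sigma_analytic[THEN conjunct1])
qed

theorem perfect_borel':
  assumes "Z \<in> sets borel" "uncountable Z"
  shows "\<exists>c (h :: (nat\<Rightarrow>bool) \<Rightarrow> real). inj h \<and> range h \<subseteq> Pc c \<and> Pc c \<subseteq> Z"
proof -
  obtain C f where Cf: "bclosed C" "bcont C f" "Z = f ` C"
    using borel_analytic[OF assms(1)] unfolding analytic_def by blast
  interpret perf C f using Cf assms(2) by unfold_locales auto
  show ?thesis using perfect_analytic Cf(3) by simp
qed

lemma real_inj_bits': "\<exists>i::real \<Rightarrow> nat \<Rightarrow> bool. inj i"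
proof
  show "inj (\<lambda>x::real. \<lambda>n. of_rat (from_nat n :: rat) < x)"
  proof (rule injI)
    fix x y :: real assume eq: "(\<lambda>n. of_rat (from_nat n :: rat) < x) = (\<lambda>n. of_rat (from_nat n) < y)"
    show "x = y"
    proof (rule ccontr)
      assume "x \<noteq> y"
      have key: "False" if uv: "u < v" and e2: "(\<lambda>n. of_rat (from_nat n :: rat) < u) = (\<lambda>n. of_rat (from_nat n) < v)" for u v :: real
      proof -
        obtain r where r: "r \<in> \<rat>" "u < r" "r < v" using Rats_dense_in_real[OF uv] by blast
        obtain q where q: "r = of_rat q" using r(1) Rats_cases by blast
        have "(of_rat (from_nat (to_nat q) :: rat) < u) = (of_rat (from_nat (to_nat q)) < v)"
          using fun_cong[OF e2, of "to_nat q"] by simp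
        then have "(r < u) = (r < v)" using q by simp
        then show False using r by auto
      qed
      show False
      proof (cases "x < y")
        case True show False using key[OF True eq] .
      next
        case False
        then have "y < x" using \<open>x \<noteq> y\<close> by auto
        show False using key[OF \<open>y < x\<close> eq[symmetric]] .
      qed
    qed
  qed
qed

lemma card_real_le_bits: "|UNIV::real set| \<le>o |UNIV::(nat\<Rightarrow>bool) set|"
  using real_inj_bits' card_of_ordLeq[of "UNIV::real set" "UNIV::(nat\<Rightarrow>bool) set"] by auto

lemma card_bits_le_real: "|UNIV::(nat\<Rightarrow>bool) set| \<le>o |UNIV::real set|"
proof -
  obtain c and h :: "(nat\<Rightarrow>bool) \<Rightarrow> real" where "inj h"
    using perfect_borel'[of UNIV] uncountable_UNIV_real by auto
  then show ?thesis using card_of_ordLeq[of "UNIV::(nat\<Rightarrow>bool) set" "UNIV::real set"] by auto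
qed

lemma codes_le_real: "|UNIV::(bool list \<Rightarrow> real) set| \<le>o |UNIV::real set|"
proof -
  obtain i :: "real \<Rightarrow> nat \<Rightarrow> bool" where i: "inj i" using real_inj_bits' by auto
  define e where "e = (\<lambda>(d::bool list \<Rightarrow> real) (k::nat).
     i (d (fst (from_nat k :: bool list \<times> nat))) (snd (from_nat k :: bool list \<times> nat)))"
  have "inj e"
  proof (rule injI)
    fix d d' assume "e d = e d'"
    show "d = d'"
    proof
      fix l
      have "i (d l) = i (d' l)"
      proof
        fix n :: nat
        have "e d (to_nat (l,n)) = e d' (to_nat (l,n))" using \<open>e d = e d'\<close> by simp
        then show "i (d l) n = i (d' l) n" unfolding e_def by simp
      qed
      then show "d l = d' l" using i by (simp add: inj_eq)
    qed
  qed
  then have "|UNIV::(bool list \<Rightarrow> real) set| \<le>o |UNIV::(nat\<Rightarrow>bool) set|"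
    using card_of_ordLeq[of "UNIV::(bool list \<Rightarrow> real) set" "UNIV::(nat\<Rightarrow>bool) set"] by auto
  then show ?thesis using card_bits_le_real ordLeq_transitive by blast
qed

lemma big_Pc:
  assumes "inj (h :: (nat\<Rightarrow>bool) \<Rightarrow> real)" "range h \<subseteq> Pc c"
  shows "|UNIV::real set| \<le>o |Pc c|"
proof -
  have "|UNIV::(nat\<Rightarrow>bool) set| \<le>o |Pc c|"
    using assms card_of_ordLeq[of "UNIV::(nat\<Rightarrow>bool) set" "Pc c"] by auto
  then show ?thesis using card_real_le_bits ordLeq_transitive by blast
qed




definition W :: "real rel" where "W = |UNIV::real set|"

lemma W_card: "Card_order W" unfolding W_def by (rule card_of_Card_order)
lemma W_wo: "wo_rel W" unfolding W_def wo_rel_def by (rule card_of_Well_order)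
lemma W_field[simp]: "Field W = UNIV" unfolding W_def by (rule Field_card_of)
lemma W_refl: "(a,a) \<in> W"
  using wo_rel.REFL[OF W_wo] unfolding refl_on_def by auto
lemma W_total: "(a,b) \<in> W \<or> (b,a) \<in> W"
  using wo_rel.TOTALS[OF W_wo] by auto
lemma W_trans: "(a,b) \<in> W \<Longrightarrow> (b,c) \<in> W \<Longrightarrow> (a,c) \<in> W"
  using wo_rel.TRANS[OF W_wo] unfolding trans_def by blast
lemma W_antisym: "(a,b) \<in> W \<Longrightarrow> (b,a) \<in> W \<Longrightarrow> a = b"
  using wo_rel.ANTISYM[OF W_wo] unfolding antisym_def by blast
lemma inf_real: "\<not> finite (UNIV::real set)" using infinite_UNIV_char_0 by blast

lemma underS_less: "|underS W a| <o |UNIV::real set|"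
proof -
  have "a \<in> Field |UNIV::real set|" by (simp only: Field_card_of) simp
  from card_of_underS[OF card_of_Card_order[of "UNIV::real set"] this] show ?thesis unfolding W_def .
qed

lemma under_less: "|under W a| <o |UNIV::real set|"
proof -
  have eq: "under W a = underS W a \<union> {a}" unfolding under_def underS_def using W_refl by auto
  have "|{a}| <o |UNIV::real set|"
    using finite_ordLess_infinite[OF card_of_Well_order card_of_Well_order, of "{a}" "UNIV::real set"] inf_real
    by (simp only: Field_card_of) simp
  then show ?thesis unfolding eq by (rule card_of_Un_ordLess_infinite[OF inf_real underS_less])
qed

lemma small_bounded:
  assumes "less_cf_continuum X" shows "\<exists>a. X \<subseteq> underS W a"
proof (rule ccontr)
  assume H: "\<not> (\<exists>a. X \<subseteq> underS W a)"
  have "cofinal X W" unfolding cofinal_def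
  proof
    fix a assume "a \<in> Field W"
    obtain a1 where a1: "a \<noteq> a1" "(a,a1) \<in> W"
      using infinite_Card_order_limit[OF W_card, of a] inf_real by auto
    obtain b where b: "b \<in> X" "b \<notin> underS W a1" using H by blast
    have "a \<noteq> b \<and> (a,b) \<in> W"
    proof (cases "b = a1")
      case True then show ?thesis using a1 by simp
    next
      case False
      then have "(b,a1) \<notin> W" using b unfolding underS_def by auto
      then have "(a1,b) \<in> W" using W_total[of b a1] by blast
      then have "(a,b) \<in> W" using W_trans[OF a1(2)] by blast
      moreover have "a \<noteq> b" using a1 \<open>(b,a1) \<notin> W\<close> by auto
      ultimately show ?thesis by simp
    qed
    then show "\<exists>b\<in>X. a \<noteq> b \<and> (a, b) \<in> W" using b by blast
  qed
  then have "cofinal X |UNIV::real set|" unfolding W_def .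
  from assms[unfolded less_cf_continuum_def, rule_format, OF this] have "|X| <o |X|" .
  then show False using ordLess_irreflexive by blast
qed

lemma unbounded:
  fixes q :: "real \<Rightarrow> bool list \<Rightarrow> real"
  assumes q: "surj q"
  shows "\<exists>a. q a [True] = \<xi> \<and> q a [True,True] = fv \<and> (\<forall>l. q a (False#l) = c l) \<and> (a',a) \<in> W"
proof -
  define S where "S = {a. q a [True] = \<xi> \<and> q a [True,True] = fv \<and> (\<forall>l. q a (False#l) = c l)}"
  define mk where "mk = (\<lambda>u::real. \<lambda>l::bool list. if l = [] then u else if l = [True] then \<xi>
       else if l = [True,True] then fv else if hd l = False then c (tl l) else 0)"
  have "inj mk" by (rule injI) (drule fun_cong[of _ _ "[]"], simp add: mk_def)
  have "mk ` UNIV \<subseteq> q ` S"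
  proof
    fix d assume "d \<in> mk ` UNIV"
    then obtain u where d: "d = mk u" by blast
    obtain a where qa: "q a = d" using surjD[OF q, of d] by auto
    have "a \<in> S" unfolding S_def using qa d by (simp add: mk_def)
    show "d \<in> q ` S" using qa \<open>a \<in> S\<close> by blast
  qed
  then have "|UNIV::real set| \<le>o |q ` S|"
    unfolding card_of_ordLeq[symmetric] using \<open>inj mk\<close> by blast
  then have big: "|UNIV::real set| \<le>o |S|" by (rule ordLeq_transitive[OF _ card_of_image])
  show ?thesis
  proof (rule ccontr)
    assume N: "\<not> ?thesis"
    have "S \<subseteq> underS W a'"
    proof
      fix a assume "a \<in> S"
      then have "(a',a) \<notin> W" using N unfolding S_def by blast
      then have "(a,a') \<in> W" "a \<noteq> a'" using W_total W_refl by blast+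
      then show "a \<in> underS W a'" unfolding underS_def by simp
    qed
    then have "|S| <o |UNIV::real set|"
      by (rule ordLeq_ordLess_trans[OF card_of_mono1 underS_less])
    from not_ordLess_ordLeq[OF this] big show False by blast
  qed
qed


definition Uo :: "(real \<Rightarrow> real set) \<Rightarrow> real \<Rightarrow> real set" where
  "Uo f a = (\<Union>b\<in>underS W a. f b)"
definition tr :: "real \<Rightarrow> real set \<Rightarrow> real" where
  "tr a' U = (SOME x. \<forall>t\<in>underS W a'. t + x \<notin> U)"
definition pt :: "(bool list \<Rightarrow> real) \<Rightarrow> real set \<Rightarrow> real" where
  "pt c U = (SOME p. p \<in> Pc c \<and> p \<notin> U)"
definition bigc :: "(bool list \<Rightarrow> real) \<Rightarrow> bool" where
  "bigc c \<longleftrightarrow> |UNIV::real set| \<le>o |Pc c|"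
definition Hs :: "(real \<Rightarrow> bool list \<Rightarrow> real) \<Rightarrow> (real \<Rightarrow> real set) \<Rightarrow> real \<Rightarrow> real set" where
  "Hs q f a = (if q a [True,True] = 0
     then (if (q a [False], a) \<in> W then (\<lambda>t. t + tr (q a [False]) (Uo f a)) ` underS W (q a [False]) else {})
     else if bigc (\<lambda>l. q a (False # l)) then {pt (\<lambda>l. q a (False#l)) (Uo f a)} else {})"

lemma adm_Hs: "wo_rel.adm_wo W (Hs q)"
proof -
  show ?thesis unfolding wo_rel.adm_wo_def[OF W_wo]
  proof (intro allI impI)
    fix f g :: "real \<Rightarrow> real set" and x assume "\<forall>y\<in>underS W x. f y = g y"
    then have "Uo f x = Uo g x" unfolding Uo_def by auto
    then show "Hs q f x = Hs q g x" unfolding Hs_def by simp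
  qed
qed

lemma fix_Hs: "wo_rel.worec W (Hs q) a = Hs q (wo_rel.worec W (Hs q)) a"
  using wo_rel.worec_fixpoint[OF W_wo adm_Hs] by metis

lemma Hs_size: "|Hs q f a| \<le>o |under W a|"
proof -
  have ne: "under W a \<noteq> {}" using W_refl unfolding under_def by auto
  show ?thesis
  proof (cases "q a [True,True] = 0")
    case True
    show ?thesis
    proof (cases "(q a [False], a) \<in> W")
      case T2: True
      have "underS W (q a [False]) \<subseteq> under W a"
        using T2 W_trans unfolding underS_def under_def by blast
      then have "|underS W (q a [False])| \<le>o |under W a|" by (rule card_of_mono1)
      then show ?thesis unfolding Hs_def using True T2
        by (simp add: ordLeq_transitive[OF card_of_image])
    next
      case False
      then show ?thesis unfolding Hs_def using True by (simp add: card_of_empty)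
    qed
  next
    case False
    then show ?thesis unfolding Hs_def using card_of_singl_ordLeq[OF ne] card_of_empty by auto
  qed
qed

lemma under_mono: "b \<in> underS W a \<Longrightarrow> under W b \<subseteq> under W a"
  unfolding underS_def under_def using W_trans by blast

lemma Uo_small:
  assumes "\<And>b. |f b| \<le>o |under W b|"
  shows "|Uo f a| <o |UNIV::real set|"
proof -
  have "|Uo f a| \<le>o |SIGMA b : underS W a. f b|" unfolding Uo_def by (rule card_of_UNION_Sigma)
  also have "|SIGMA b : underS W a. f b| \<le>o |SIGMA b : underS W a. under W a|"
  proof (rule card_of_Sigma_mono1, rule ballI)
    fix b assume "b \<in> underS W a"
    from ordLeq_transitive[OF assms card_of_mono1[OF under_mono[OF this]]]
    show "|f b| \<le>o |under W a|" .
  qed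
  also have "|underS W a \<times> under W a| <o |UNIV::real set|"
    by (rule times_less_inf[OF inf_real underS_less under_less])
  finally show ?thesis .
qed

lemma tr_ok:
  assumes "|U| <o |UNIV::real set|"
  shows "\<forall>t\<in>underS W a'. t + tr a' U \<notin> U"
proof -
  define M where "M = (\<lambda>(u,t). u - t) ` (U \<times> underS W a')"
  have "|M| \<le>o |U \<times> underS W a'|" unfolding M_def by (rule card_of_image)
  also have "|U \<times> underS W a'| <o |UNIV::real set|"
    by (rule times_less_inf[OF inf_real assms underS_less])
  finally have "|M| <o |UNIV::real set|" .
  then have "M \<noteq> UNIV" using ordLess_irreflexive by auto
  then obtain x where x: "x \<notin> M" by blast
  have "\<forall>t\<in>underS W a'. t + x \<notin> U"
  proof (intro ballI notI)
    fix t assume "t \<in> underS W a'" "t + x \<in> U"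
    then have "(t + x) - t \<in> M" unfolding M_def by (auto intro!: image_eqI[of _ _ "(t+x,t)"])
    then show False using x by simp
  qed
  then show ?thesis unfolding tr_def by (rule someI)
qed

lemma pt_ok:
  assumes "|U| <o |UNIV::real set|" "bigc c"
  shows "pt c U \<in> Pc c \<and> pt c U \<notin> U"
proof -
  have "\<not> Pc c \<subseteq> U"
  proof
    assume "Pc c \<subseteq> U"
    then have "|Pc c| <o |UNIV::real set|" using ordLeq_ordLess_trans[OF card_of_mono1 assms(1)] by blast
    then show False using assms(2) unfolding bigc_def using not_ordLess_ordLeq by blast
  qed
  then have "\<exists>p. p \<in> Pc c \<and> p \<notin> U" by blast
  then show ?thesis unfolding pt_def by (rule someI_ex)
qed


theorem mainTheorem6:
  "\<exists>(I :: real set) (B :: real \<Rightarrow> real set).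
     (card_of I, card_of (UNIV :: real set)) \<in> ordIso \<and>
     (\<forall>i\<in>I. \<forall>j\<in>I. i \<noteq> j \<longrightarrow> B i \<inter> B j = {}) \<and>
     (\<Union>i\<in>I. B i) = UNIV \<and>
     (\<forall>i\<in>I. Bernstein (B i) \<and> lt_covering_cf_c (B i))"
proof -
  have "\<exists>g. g ` (UNIV::real set) = (UNIV :: (bool list \<Rightarrow> real) set)"
    using card_of_ordLeq2[of "UNIV::(bool list \<Rightarrow> real) set" "UNIV::real set"] codes_le_real by blast
  then obtain q :: "real \<Rightarrow> bool list \<Rightarrow> real" where q: "surj q" by blast
  define v where "v = wo_rel.worec W (Hs q)"
  have vfix: "v a = Hs q v a" for a unfolding v_def by (rule fix_Hs)
  have vsize: "|v a| \<le>o |under W a|" for a by (subst vfix) (rule Hs_size)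
  have Usmall: "|Uo v a| <o |UNIV::real set|" for a by (rule Uo_small[OF vsize])
  have vdisjU: "v a \<inter> Uo v a = {}" for a
  proof (cases "q a [True,True] = 0")
    case True
    then show ?thesis using tr_ok[OF Usmall, of "q a [False]" a] by (subst vfix) (auto simp: Hs_def)
  next
    case False
    then show ?thesis using pt_ok[OF Usmall, of "\<lambda>l. q a (False#l)" a] by (subst vfix) (auto simp: Hs_def)
  qed
  have vsubU: "v b \<subseteq> Uo v a" if "b \<in> underS W a" for a b
    using that unfolding Uo_def by blast
  have vdisj: "v a \<inter> v b = {}" if "a \<noteq> b" for a b
  proof -
    have "b \<in> underS W a \<or> a \<in> underS W b" using that W_total[of a b] unfolding underS_def by auto
    then show ?thesis using vdisjU[of a] vdisjU[of b] vsubU[of b a] vsubU[of a b] by blast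
  qed
  define B where "B i = (\<Union>{v a | a. q a [True] = i}) \<union> (if i = 0 then - (\<Union>a. v a) else {})" for i
  have inB: "v a \<subseteq> B (q a [True])" for a unfolding B_def by blast
  have Bdisj: "B i \<inter> B j = {}" if "i \<noteq> j" for i j
  proof (rule ccontr)
    assume "B i \<inter> B j \<noteq> {}"
    then obtain x where x: "x \<in> B i" "x \<in> B j" by blast
    show False
    proof (cases "x \<in> (\<Union>a. v a)")
      case True
      then have "x \<in> (\<Union>{v a | a. q a [True] = i})" "x \<in> (\<Union>{v a | a. q a [True] = j})"
        using x unfolding B_def by (auto split: if_splits)
      then obtain a b where "x \<in> v a" "q a [True] = i" "x \<in> v b" "q b [True] = j" by blast
      then show False using vdisj[of a b] that by auto
    next
      case False
      then show False using x that unfolding B_def by (auto split: if_splits)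
    qed
  qed
  have Bcov: "(\<Union>i. B i) = UNIV"
  proof -
    have "x \<in> (\<Union>i. B i)" for x
    proof (cases "x \<in> (\<Union>a. v a)")
      case True
      then obtain a where "x \<in> v a" by blast
      then show ?thesis using inB[of a] by blast
    next
      case False
      then have "x \<in> B 0" unfolding B_def by simp
      then show ?thesis by blast
    qed
    then show ?thesis by blast
  qed
  have Bmeet: "Z \<inter> B i \<noteq> {}" if Z: "Z \<in> sets borel" "uncountable Z" for Z :: "real set" and i
  proof -
    obtain c and h :: "(nat\<Rightarrow>bool) \<Rightarrow> real" where h: "inj h" "range h \<subseteq> Pc c" "Pc c \<subseteq> Z"
      using perfect_borel'[OF Z] by blast
    have bc: "bigc c" unfolding bigc_def by (rule big_Pc[OF h(1,2)])
    obtain a where a: "q a [True] = i" "q a [True,True] = 1" "\<forall>l. q a (False#l) = c l"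
      using unbounded[OF q, of i 1 c 0] by blast
    have ca: "(\<lambda>l. q a (False#l)) = c" using a(3) by auto
    have "v a = {pt c (Uo v a)}" using a(2) bc ca by (subst vfix) (simp add: Hs_def)
    moreover have "pt c (Uo v a) \<in> Z" using pt_ok[OF Usmall bc] h(3) by blast
    ultimately show ?thesis using inB[of a] a(1) by blast
  qed
  have Bern: "Bernstein (B i)" for i
    unfolding Bernstein_def
  proof (intro allI impI conjI)
    fix Z :: "real set" assume Z: "Z \<in> sets borel \<and> uncountable Z"
    show "Z \<inter> B i \<noteq> {}" using Bmeet Z by blast
    have "Z \<inter> B (i+1) \<noteq> {}" using Bmeet Z by blast
    then show "Z - B i \<noteq> {}" using Bdisj[of i "i+1"] by auto
  qed
  have Bcover: "lt_covering_cf_c (B i)" for i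
    unfolding lt_covering_cf_c_def
  proof (intro allI impI)
    fix X assume "less_cf_continuum X"
    then obtain a' where a': "X \<subseteq> underS W a'" using small_bounded by blast
    obtain a where a: "q a [True] = i" "q a [True,True] = 0" "\<forall>l. q a (False#l) = (\<lambda>_. a') l" "(a',a) \<in> W"
      using unbounded[OF q, of i 0 "\<lambda>_. a'" a'] by blast
    have qa: "q a [False] = a'" using a(3) by auto
    have "v a = (\<lambda>t. t + tr a' (Uo v a)) ` underS W a'" using a(2) a(4) qa by (subst vfix) (simp add: Hs_def)
    then have "(\<lambda>b. b + tr a' (Uo v a)) ` X \<subseteq> B i" using a' inB[of a] a(1) by blast
    then show "\<exists>x. (\<lambda>b. b + x) ` X \<subseteq> B i" by blast
  qed
  show ?thesis
    apply (rule exI[of _ UNIV], rule exI[of _ B])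
    using Bdisj Bcov Bern Bcover card_of_refl by auto
qed

end
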